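(* Let $G$ be a 2-tree on $n$ vertices with a fixed construction sequence, and let $v_1,\ldots,v_n$ be an ordering of $V(G)$ such that the graph obtained from $G$ by adding the edges $v_kv_{k+1}$ ($1\le k<n$) and $v_nv_1$ that are not already present has a plane embedding in which $(v_1,\ldots,v_n)$ is a one-sided Hamiltonian cycle with special edge $v_nv_1$. Let $e=ab$ be an edge of $G$ with $|X_L(e)|\ge 2$, and let $x$ be the element of $X_L(e)$ with the largest index. Let $e_1=xa$ and $e_2=xb$ be the two edges of $S(e)$ incident with $x$. Then $X_R(e_1)=X_R(e_2)=\emptyset$, and $|X_L(e_1)|\le 1$ or $|X_L(e_2)|\le 1$.
   Context: A 2-tree is built from $K_3$ by repeatedly stacking a new vertex over an existing edge $xy$ (making it adjacent exactly to $x$ and $y$); fix such a construction sequence. For an edge $e$, $X(e)$ is the set of vertices stacked over $e$ in this sequence, and $S(e)$ is the set of edges created by these stackings (each joins an endpoint of $e$ to a vertex of $X(e)$). For $e=v_iv_j$ with $i<j$: $X_L(e)=\{v_k\in X(e): k<i\}$, $X_M(e)=\{v_k\in X(e): i<k<j\}$, $X_R(e)=\{v_k\in X(e): k>j\}$. One-sided Hamiltonian cycle: a plane graph on $n\ge3$ vertices has one with special edge $v_nv_1$ if $(v_1,\ldots,v_n)$ is a Hamiltonian cycle, $v_nv_1$ is on the outer face, and, with $D$ the closed bounded region bounded by the cycle, for every $j\in\{2,\ldots,n\}$ the non-cycle edges joining $v_j$ to some $v_i$ with $i<j$ are all in the interior of $D$ or all in the exterior of $D$. *)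

theory Defs
  imports "HOL-Analysis.Analysis"
begin

text \<open>A construction sequence is a base triangle (t1,t2,t3) together with a list of
stacking steps (w, x, y): the new vertex w is stacked over the existing edge {x,y}.
Edges are represented as 2-element vertex sets.\<close>

definition cs_verts :: "'v \<times> 'v \<times> 'v \<Rightarrow> ('v \<times> 'v \<times> 'v) list \<Rightarrow> nat \<Rightarrow> 'v set" where
  "cs_verts T st k = (case T of (t1,t2,t3) \<Rightarrow> {t1,t2,t3} \<union> {fst (st!i) | i. i < k})"

definition cs_edges :: "'v \<times> 'v \<times> 'v \<Rightarrow> ('v \<times> 'v \<times> 'v) list \<Rightarrow> nat \<Rightarrow> 'v set set" where
  "cs_edges T st k = (case T of (t1,t2,t3) \<Rightarrow>
     {{t1,t2},{t2,t3},{t1,t3}} \<union>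
     {{fst (st!i), fst (snd (st!i))} | i. i < k} \<union>
     {{fst (st!i), snd (snd (st!i))} | i. i < k})"

definition valid_cs :: "'v \<times> 'v \<times> 'v \<Rightarrow> ('v \<times> 'v \<times> 'v) list \<Rightarrow> bool" where
  "valid_cs T st \<longleftrightarrow> (case T of (t1,t2,t3) \<Rightarrow> t1 \<noteq> t2 \<and> t2 \<noteq> t3 \<and> t1 \<noteq> t3) \<and>
     (\<forall>i < length st. fst (st!i) \<notin> cs_verts T st i \<and>
        {fst (snd (st!i)), snd (snd (st!i))} \<in> cs_edges T st i)"

abbreviation tree_verts where "tree_verts T st \<equiv> cs_verts T st (length st)"
abbreviation tree_edges where "tree_edges T st \<equiv> cs_edges T st (length st)"

definition stackedX :: "('v \<times> 'v \<times> 'v) list \<Rightarrow> 'v set \<Rightarrow> 'v set" where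
  "stackedX st e = {fst (st!i) | i. i < length st \<and> {fst (snd (st!i)), snd (snd (st!i))} = e}"

definition vidx :: "(nat \<Rightarrow> 'v) \<Rightarrow> nat \<Rightarrow> 'v \<Rightarrow> nat" where
  "vidx v n u = inv_into {1..n} v u"

definition XL :: "('v \<times> 'v \<times> 'v) list \<Rightarrow> (nat \<Rightarrow> 'v) \<Rightarrow> nat \<Rightarrow> 'v set \<Rightarrow> 'v set" where
  "XL st v n e = {w \<in> stackedX st e. \<forall>u\<in>e. vidx v n w < vidx v n u}"

definition XM :: "('v \<times> 'v \<times> 'v) list \<Rightarrow> (nat \<Rightarrow> 'v) \<Rightarrow> nat \<Rightarrow> 'v set \<Rightarrow> 'v set" where
  "XM st v n e = {w \<in> stackedX st e. (\<exists>u\<in>e. vidx v n u < vidx v n w) \<and> (\<exists>u\<in>e. vidx v n w < vidx v n u)}"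

definition XR :: "('v \<times> 'v \<times> 'v) list \<Rightarrow> (nat \<Rightarrow> 'v) \<Rightarrow> nat \<Rightarrow> 'v set \<Rightarrow> 'v set" where
  "XR st v n e = {w \<in> stackedX st e. \<forall>u\<in>e. vidx v n u < vidx v n w}"

definition plane_embedding ::
  "'v set \<Rightarrow> 'v set set \<Rightarrow> ('v \<Rightarrow> complex) \<Rightarrow> ('v set \<Rightarrow> real \<Rightarrow> complex) \<Rightarrow> bool" where
  "plane_embedding V E p \<gamma> \<longleftrightarrow> inj_on p V \<and>
     (\<forall>e\<in>E. arc (\<gamma> e) \<and> {pathstart (\<gamma> e), pathfinish (\<gamma> e)} = p ` e) \<and>
     (\<forall>e\<in>E. \<forall>u\<in>V. p u \<in> path_image (\<gamma> e) \<longrightarrow> u \<in> e) \<and>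
     (\<forall>e\<in>E. \<forall>f\<in>E. e \<noteq> f \<longrightarrow> path_image (\<gamma> e) \<inter> path_image (\<gamma> f) \<subseteq> p ` (e \<inter> f))"

definition cycle_edges :: "(nat \<Rightarrow> 'v) \<Rightarrow> nat \<Rightarrow> 'v set set" where
  "cycle_edges v n = {{v k, v (Suc k)} | k. 1 \<le> k \<and> k < n} \<union> {{v n, v 1}}"

text \<open>The closed region D is the cycle curve
together with its inside; the interior of D is the inside of the curve, the exterior
of D is its outside. The outer face is the unbounded component of the complement of
the drawing.\<close>
definition one_sided_ham ::
  "'v set \<Rightarrow> 'v set set \<Rightarrow> ('v \<Rightarrow> complex) \<Rightarrow> ('v set \<Rightarrow> real \<Rightarrow> complex) \<Rightarrow> (nat \<Rightarrow> 'v) \<Rightarrow> nat \<Rightarrow> bool" where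
  "one_sided_ham V E p \<gamma> v n \<longleftrightarrow>
     n \<ge> 3 \<and> bij_betw v {1..n} V \<and> cycle_edges v n \<subseteq> E \<and>
     path_image (\<gamma> {v n, v 1}) \<subseteq> closure (outside (\<Union>e\<in>E. path_image (\<gamma> e))) \<and>
     (let C = (\<Union>e\<in>cycle_edges v n. path_image (\<gamma> e)) in
      \<forall>j\<in>{2..n}.
        let N = {e \<in> E - cycle_edges v n. \<exists>i. 1 \<le> i \<and> i < j \<and> e = {v i, v j}} in
        (\<forall>e\<in>N. path_image (\<gamma> e) - p ` e \<subseteq> inside C) \<or>
        (\<forall>e\<in>N. path_image (\<gamma> e) - p ` e \<subseteq> outside C))"

end

theory Submission
  imports Defs
begin


lemma cc_inside_closed:
  assumes "connected_component (- C) u w" "u \<in> inside C"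
  shows "w \<in> inside C"
proof -
  have "w \<in> connected_component_set (- C) u" using assms(1) by simp
  hence eq: "connected_component_set (- C) w = connected_component_set (- C) u"
    by (rule connected_component_eq)
  have "w \<notin> C" using assms(1) connected_component_in by blast
  thus ?thesis using assms(2) eq by (simp add: inside_def)
qed

lemma chord_cross:
  fixes J c1 c2 :: "real \<Rightarrow> complex"
  assumes J: "simple_path J" "pathfinish J = pathstart J"
    and AB: "compact A" "compact B" "A \<union> B = path_image J" "A \<inter> B \<subseteq> {P,Q}"
    and RS: "R \<in> A" "R \<notin> B" "S \<in> B" "S \<notin> A"
    and c1: "path c1" "P \<in> path_image c1" "Q \<in> path_image c1"
    and PQ: "P \<in> path_image J" "Q \<in> path_image J"
    and c2: "arc c2" "pathstart c2 = R" "pathfinish c2 = S"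
    and dis: "path_image c1 \<inter> path_image c2 = {}"
    and c2J: "path_image c2 \<inter> path_image J \<subseteq> {R,S}"
    and UW: "(U = inside (path_image J) \<and> W = outside (path_image J)) \<or>
             (U = outside (path_image J) \<and> W = inside (path_image J))"
    and c1U: "path_image c1 - {P,Q} \<subseteq> U"
    and c2U: "path_image c2 - {R,S} \<subseteq> U"
  shows False
proof -
  let ?C = "path_image J"
  have JIO: "inside ?C \<noteq> {} \<and> open (inside ?C) \<and> connected (inside ?C) \<and>
          outside ?C \<noteq> {} \<and> open (outside ?C) \<and> connected (outside ?C) \<and>
          frontier (inside ?C) = ?C \<and> frontier (outside ?C) = ?C"
    using Jordan_inside_outside[OF J] by blast
  have io: "inside ?C \<inter> ?C = {}" "outside ?C \<inter> ?C = {}" "inside ?C \<inter> outside ?C = {}"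
    by simp_all
  have cl: "?C \<subseteq> closure (inside ?C)" "?C \<subseteq> closure (outside ?C)"
    using JIO frontier_def[of "inside ?C"] frontier_def[of "outside ?C"] by auto
  have W0: "W \<noteq> {} \<and> connected W \<and> ?C \<subseteq> closure W \<and> W \<inter> ?C = {} \<and> U \<inter> W = {}"
    using UW
  proof
    assume h: "U = inside ?C \<and> W = outside ?C"
    thus ?thesis using JIO cl io by (simp add: Int_commute)
  next
    assume h: "U = outside ?C \<and> W = inside ?C"
    thus ?thesis using JIO cl io by (simp add: Int_commute)
  qed
  hence W: "W \<noteq> {}" "connected W" "?C \<subseteq> closure W" "W \<inter> ?C = {}" "U \<inter> W = {}"
    by auto
  obtain w where w: "w \<in> W" using W by blast
  have inj: "inj_on c2 {0..1}" using c2 arc_imp_inj_on by blast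
  have pc2: "path c2" using c2 arc_imp_path by blast
  define u where "u = c2 (1/2)"
  have R0: "c2 0 = R" and S1: "c2 1 = S" using c2 by (auto simp: pathstart_def pathfinish_def)
  have uR: "u \<noteq> R" using inj R0 unfolding u_def inj_on_def by force
  have uS: "u \<noteq> S" using inj S1 unfolding u_def inj_on_def by force
  have uimg: "u \<in> path_image c2" unfolding u_def path_image_def by auto
  have uU: "u \<in> U" using uimg uR uS c2U by blast
  have RC: "R \<in> ?C" "S \<in> ?C" using RS(1,3) AB(3) by blast+
  have c1W: "path_image c1 \<inter> W = {}" using c1U W PQ by blast
  have con1: "connected (c2 ` {1/2..1} \<union> insert S W)"
  proof (rule connected_Un)
    have "continuous_on {1/2..1} c2"
      using pc2 unfolding path_def by (rule continuous_on_subset) auto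
    thus "connected (c2 ` {1/2..1})"
      using connected_continuous_image connected_Icc by blast
    have "S \<in> closure W" using W(3) RC by blast
    hence "insert S W \<subseteq> closure W" using closure_subset[of W] by blast
    thus "connected (insert S W)"
      by (rule connected_intermediate_closure[OF W(2) subset_insertI])
    have "S \<in> c2 ` {1/2..1}" using S1 by (intro rev_image_eqI[of 1]) auto
    thus "c2 ` {1/2..1} \<inter> insert S W \<noteq> {}" by blast
  qed
  have dis1: "(c2 ` {1/2..1} \<union> insert S W) \<inter> (path_image c1 \<union> A) = {}"
  proof -
    have "c2 t \<notin> path_image c1 \<union> A" if t: "t \<in> {1/2..1}" for t
    proof
      assume h: "c2 t \<in> path_image c1 \<union> A"
      have ci: "c2 t \<in> path_image c2" using t unfolding path_image_def by auto
      show False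
      proof (cases "c2 t \<in> path_image c1")
        case True thus False using dis ci by blast
      next
        case False
        hence "c2 t \<in> A" using h by blast
        hence "c2 t \<in> ?C" using AB by blast
        hence "c2 t \<in> {R,S}" using c2J ci by blast
        moreover have "c2 t \<noteq> R" using inj R0 t unfolding inj_on_def by force
        ultimately show False using RS \<open>c2 t \<in> A\<close> by auto
      qed
    qed
    moreover have "S \<notin> path_image c1" using dis c2 by (auto simp: pathfinish_in_path_image[of c2, simplified c2])
    moreover have "W \<inter> A = {}" using W(4) AB(3) by blast
    ultimately show ?thesis using RS(4) c1W by blast
  qed
  have cc1: "connected_component (- (path_image c1 \<union> A)) u w"
    unfolding connected_component_def
    apply (rule exI[of _ "c2 ` {1/2..1} \<union> insert S W"])
    using con1 dis1 w by (auto simp: u_def)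
  have con2: "connected (c2 ` {0..1/2} \<union> insert R W)"
  proof (rule connected_Un)
    have "continuous_on {0..1/2} c2"
      using pc2 unfolding path_def by (rule continuous_on_subset) auto
    thus "connected (c2 ` {0..1/2})"
      using connected_continuous_image connected_Icc by blast
    have "R \<in> closure W" using W(3) RC by blast
    hence "insert R W \<subseteq> closure W" using closure_subset[of W] by blast
    thus "connected (insert R W)"
      by (rule connected_intermediate_closure[OF W(2) subset_insertI])
    have "R \<in> c2 ` {0..1/2}" using R0 by (intro rev_image_eqI[of 0]) auto
    thus "c2 ` {0..1/2} \<inter> insert R W \<noteq> {}" by blast
  qed
  have dis2: "(c2 ` {0..1/2} \<union> insert R W) \<inter> (path_image c1 \<union> B) = {}"
  proof -
    have "c2 t \<notin> path_image c1 \<union> B" if t: "t \<in> {0..1/2}" for t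
    proof
      assume h: "c2 t \<in> path_image c1 \<union> B"
      have ci: "c2 t \<in> path_image c2" using t unfolding path_image_def by auto
      show False
      proof (cases "c2 t \<in> path_image c1")
        case True thus False using dis ci by blast
      next
        case False
        hence "c2 t \<in> B" using h by blast
        hence "c2 t \<in> ?C" using AB by blast
        hence "c2 t \<in> {R,S}" using c2J ci by blast
        moreover have "c2 t \<noteq> S" using inj S1 t unfolding inj_on_def by force
        ultimately show False using RS \<open>c2 t \<in> B\<close> by auto
      qed
    qed
    moreover have "R \<notin> path_image c1" using dis c2 by (auto simp: pathstart_in_path_image[of c2, simplified c2])
    moreover have "W \<inter> B = {}" using W(4) AB(3) by blast
    ultimately show ?thesis using RS(2) c1W by blast
  qed
  have cc2: "connected_component (- (path_image c1 \<union> B)) u w"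
    unfolding connected_component_def
    apply (rule exI[of _ "c2 ` {0..1/2} \<union> insert R W"])
    using con2 dis2 w by (auto simp: u_def)
  have int: "(path_image c1 \<union> A) \<inter> (path_image c1 \<union> B) = path_image c1"
    using AB(4) c1(2,3) by blast
  have "connected_component (- ((path_image c1 \<union> A) \<union> (path_image c1 \<union> B))) u w"
  proof (rule Janiszewski)
    have "compact (path_image c1)" using c1(1) by (rule compact_path_image)
    thus "compact (path_image c1 \<union> A)" "closed (path_image c1 \<union> B)"
      using AB(1,2) by (auto intro: compact_imp_closed)
    show "connected ((path_image c1 \<union> A) \<inter> (path_image c1 \<union> B))"
      unfolding int using c1(1) by (rule connected_path_image)
  qed (fact cc1, fact cc2)
  hence cc: "connected_component (- ?C) u w"
    by (rule connected_component_of_subset) (use AB(3) in blast)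
  show False
    using UW
  proof
    assume h: "U = inside ?C \<and> W = outside ?C"
    hence "w \<in> inside ?C" using cc_inside_closed[OF cc] uU by blast
    thus False using h w inside_Int_outside[of ?C] by blast
  next
    assume h: "U = outside ?C \<and> W = inside ?C"
    hence "u \<in> inside ?C" using cc_inside_closed[OF connected_component_sym[OF cc]] w by blast
    thus False using h uU inside_Int_outside[of ?C] by blast
  qed
qed



primrec chn :: "(nat \<Rightarrow> real \<Rightarrow> complex) \<Rightarrow> nat \<Rightarrow> nat \<Rightarrow> real \<Rightarrow> complex" where
  "chn H N 0 = H N"
| "chn H N (Suc m) = H (N - Suc m) +++ chn H N m"

lemma orient_arc:
  assumes "arc g" "{pathstart g, pathfinish g} = {a, b}" "a \<noteq> b"
  defines "g' \<equiv> (if pathstart g = a then g else reversepath g)"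
  shows "arc g' \<and> pathstart g' = a \<and> pathfinish g' = b \<and> path_image g' = path_image g"
proof -
  have d: "pathstart g \<noteq> pathfinish g" using arc_distinct_ends[OF assms(1)] by metis
  show ?thesis
  proof (cases "pathstart g = a")
    case True
    hence "pathfinish g = b" using assms(2) d by (metis doubleton_eq_iff)
    thus ?thesis using True assms(1) by (simp add: g'_def)
  next
    case False
    hence "pathstart g = b" "pathfinish g = a" using assms(2,3) d by (metis doubleton_eq_iff)+
    thus ?thesis using False assms(1) by (simp add: g'_def arc_reversepath)
  qed
qed

locale osh =
  fixes V :: "'v set" and E :: "'v set set" and p :: "'v \<Rightarrow> complex"
    and \<gamma> :: "'v set \<Rightarrow> real \<Rightarrow> complex" and v :: "nat \<Rightarrow> 'v" and n :: nat
  assumes emb: "plane_embedding V E p \<gamma>" and ham: "one_sided_ham V E p \<gamma> v n"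
begin

lemma n3: "n \<ge> 3" and bij: "bij_betw v {1..n} V" and cycE: "cycle_edges v n \<subseteq> E"
  using ham by (simp_all add: one_sided_ham_def)

lemma injp: "inj_on p V" using emb by (simp add: plane_embedding_def)
lemma arcE: "e \<in> E \<Longrightarrow> arc (\<gamma> e)" using emb by (simp add: plane_embedding_def)
lemma endsE: "e \<in> E \<Longrightarrow> {pathstart (\<gamma> e), pathfinish (\<gamma> e)} = p ` e"
  using emb by (simp add: plane_embedding_def)
lemma vertE: "e \<in> E \<Longrightarrow> u \<in> V \<Longrightarrow> p u \<in> path_image (\<gamma> e) \<Longrightarrow> u \<in> e"
  using emb by (simp add: plane_embedding_def)
lemma disjE': "e \<in> E \<Longrightarrow> f \<in> E \<Longrightarrow> e \<noteq> f \<Longrightarrow> path_image (\<gamma> e) \<inter> path_image (\<gamma> f) \<subseteq> p ` (e \<inter> f)"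
  using emb unfolding plane_embedding_def by blast

lemma vert_in_img: assumes "e \<in> E" "u \<in> e" shows "p u \<in> path_image (\<gamma> e)"
proof -
  have "p u \<in> {pathstart (\<gamma> e), pathfinish (\<gamma> e)}" using endsE[OF assms(1)] assms(2) by auto
  thus ?thesis by auto
qed

definition CC where "CC = (\<Union>e\<in>cycle_edges v n. path_image (\<gamma> e))"
definition ins where "ins e \<longleftrightarrow> path_image (\<gamma> e) - p ` e \<subseteq> inside CC"
definition outs where "outs e \<longleftrightarrow> path_image (\<gamma> e) - p ` e \<subseteq> outside CC"

lemma onesided:
  assumes "j \<in> {2..n}"
  shows "(\<forall>e\<in>{e \<in> E - cycle_edges v n. \<exists>i. 1 \<le> i \<and> i < j \<and> e = {v i, v j}}. ins e) \<or>
         (\<forall>e\<in>{e \<in> E - cycle_edges v n. \<exists>i. 1 \<le> i \<and> i < j \<and> e = {v i, v j}}. outs e)"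
  using ham assms unfolding one_sided_ham_def Let_def ins_def outs_def CC_def by blast

lemma vV: "i \<in> {1..n} \<Longrightarrow> v i \<in> V" using bij bij_betwE by blast
lemma vinj: "i \<in> {1..n} \<Longrightarrow> j \<in> {1..n} \<Longrightarrow> v i = v j \<Longrightarrow> i = j"
  using bij bij_betw_imp_inj_on inj_on_eq_iff by metis

lemma vneq: "i \<in> {1..n} \<Longrightarrow> j \<in> {1..n} \<Longrightarrow> i \<noteq> j \<Longrightarrow> v i \<noteq> v j"
  using vinj by blast

definition nx where "nx k = (if k < n then Suc k else 1)"
definition ce where "ce k = {v k, v (nx k)}"

lemma nx_range: "k \<in> {1..n} \<Longrightarrow> nx k \<in> {1..n}" using n3 by (auto simp: nx_def)
lemma nx_neq: "k \<in> {1..n} \<Longrightarrow> nx k \<noteq> k" using n3 by (auto simp: nx_def)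

lemma cyc_ce: "cycle_edges v n = ce ` {1..n}"
proof
  show "cycle_edges v n \<subseteq> ce ` {1..n}"
  proof
    fix e assume "e \<in> cycle_edges v n"
    then consider k where "1 \<le> k" "k < n" "e = {v k, v (Suc k)}" | "e = {v n, v 1}"
      unfolding cycle_edges_def by blast
    thus "e \<in> ce ` {1..n}"
    proof cases
      case 1 thus ?thesis by (intro rev_image_eqI[of k]) (auto simp: ce_def nx_def)
    next
      case 2 thus ?thesis using n3 by (intro rev_image_eqI[of n]) (auto simp: ce_def nx_def)
    qed
  qed
  show "ce ` {1..n} \<subseteq> cycle_edges v n"
  proof
    fix e assume "e \<in> ce ` {1..n}"
    then obtain k where k: "k \<in> {1..n}" "e = ce k" by blast
    show "e \<in> cycle_edges v n"
    proof (cases "k < n")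
      case True thus ?thesis using k unfolding cycle_edges_def ce_def nx_def by auto
    next
      case False hence "k = n" using k by auto
      thus ?thesis using k unfolding cycle_edges_def ce_def nx_def by auto
    qed
  qed
qed

lemma ce_E: "k \<in> {1..n} \<Longrightarrow> ce k \<in> E" using cyc_ce cycE by blast

lemma ce_mem: "k \<in> {1..n} \<Longrightarrow> m \<in> {1..n} \<Longrightarrow> v m \<in> ce k \<Longrightarrow> m = k \<or> m = nx k"
  using vinj nx_range unfolding ce_def by blast

lemma ce_inj: assumes "k \<in> {1..n}" "l \<in> {1..n}" "ce k = ce l" shows "k = l"
proof -
  have "v k \<in> ce l" "v (nx k) \<in> ce l" using assms(3) by (auto simp: ce_def)
  hence "k = l \<or> k = nx l" "nx k = l \<or> nx k = nx l"
    using ce_mem assms nx_range by blast+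
  thus ?thesis using assms(1,2) n3 nx_neq[OF assms(1)] unfolding nx_def
    by (auto split: if_splits)
qed

definition h where
  "h k = (if pathstart (\<gamma> (ce k)) = p (v k) then \<gamma> (ce k) else reversepath (\<gamma> (ce k)))"

lemma h_props: assumes "k \<in> {1..n}"
  shows "arc (h k) \<and> pathstart (h k) = p (v k) \<and> pathfinish (h k) = p (v (nx k)) \<and>
         path_image (h k) = path_image (\<gamma> (ce k))"
proof -
  have "p (v k) \<noteq> p (v (nx k))"
    using injp vV vinj assms nx_range nx_neq inj_on_eq_iff by metis
  thus ?thesis unfolding h_def
    using orient_arc[of "\<gamma> (ce k)" "p (v k)" "p (v (nx k))"] arcE ce_E assms endsE
    by (simp add: ce_def)
qed


lemma chn_props:
  "m \<le> n - 2 \<Longrightarrow> arc (chn h n m) \<and> pathstart (chn h n m) = p (v (n - m)) \<and>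
     pathfinish (chn h n m) = p (v 1) \<and>
     path_image (chn h n m) = (\<Union>k\<in>{n-m..n}. path_image (\<gamma> (ce k)))"
proof (induction m)
  case 0
  have "n \<in> {1..n}" "nx n = 1" using n3 by (auto simp: nx_def)
  thus ?case using h_props[of n] by simp
next
  case (Suc m)
  define k0 where "k0 = n - Suc m"
  have k0: "k0 \<in> {1..n}" "2 \<le> k0" "nx k0 = n - m" "k0 < n - m"
    using Suc.prems n3 by (auto simp: k0_def nx_def)
  have IH: "arc (chn h n m) \<and> pathstart (chn h n m) = p (v (n - m)) \<and>
     pathfinish (chn h n m) = p (v 1) \<and>
     path_image (chn h n m) = (\<Union>k\<in>{n-m..n}. path_image (\<gamma> (ce k)))"
    using Suc by simp
  have hk0: "arc (h k0) \<and> pathstart (h k0) = p (v k0) \<and> pathfinish (h k0) = p (v (n - m)) \<and>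
         path_image (h k0) = path_image (\<gamma> (ce k0))" using h_props[OF k0(1)] k0(3) by simp
  have inter: "path_image (\<gamma> (ce k0)) \<inter> path_image (\<gamma> (ce k)) \<subseteq> {p (v (n - m))}"
    if k: "k \<in> {n-m..n}" for k
  proof -
    have k1: "k \<in> {1..n}" using k k0 by auto
    have "ce k0 \<noteq> ce k" using ce_inj[OF k0(1) k1] k k0 by auto
    hence sub: "path_image (\<gamma> (ce k0)) \<inter> path_image (\<gamma> (ce k)) \<subseteq> p ` (ce k0 \<inter> ce k)"
      using disjE' ce_E k0 k1 by blast
    have "u = v (n - m)" if u: "u \<in> ce k0" "u \<in> ce k" for u
    proof -
      have nk: "nx k \<in> {1..n}" "nx k0 \<in> {1..n}" using nx_range k1 k0 by auto
      have "nx k \<noteq> k0" using k k0 n3 by (auto simp: nx_def)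
      moreover have "k \<noteq> k0" using k k0 by auto
      moreover have "u = v k0 \<or> u = v (nx k0)" "u = v k \<or> u = v (nx k)" using u by (auto simp: ce_def)
      ultimately show ?thesis using vinj k0 k1 nk by metis
    qed
    thus ?thesis using sub by blast
  qed
  have eq: "chn h n (Suc m) = h k0 +++ chn h n m" by (simp add: k0_def)
  have "arc (chn h n (Suc m))" unfolding eq
  proof (rule arc_join)
    show "path_image (h k0) \<inter> path_image (chn h n m) \<subseteq> {pathstart (chn h n m)}"
    proof
      fix x assume "x \<in> path_image (h k0) \<inter> path_image (chn h n m)"
      then obtain k where kk: "k\<in>{n-m..n}" "x \<in> path_image (\<gamma> (ce k0))" "x \<in> path_image (\<gamma> (ce k))"
        using IH hk0 by auto
      have "x \<in> {p (v (n - m))}" using inter[OF kk(1)] kk(2,3) by blast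
      thus "x \<in> {pathstart (chn h n m)}" using IH by simp
    qed
  qed (use IH hk0 in simp_all)
  moreover have "path_image (chn h n (Suc m)) = (\<Union>k\<in>{n-Suc m..n}. path_image (\<gamma> (ce k)))"
  proof -
    have "{n - Suc m..n} = insert k0 {n-m..n}" using k0 by (auto simp: k0_def)
    thus ?thesis unfolding eq using IH hk0 by (simp add: path_image_join)
  qed
  ultimately show ?case using IH hk0 by (simp add: eq k0_def)
qed

definition J where "J = h 1 +++ chn h n (n - 2)"

lemma J_props: "simple_path J \<and> pathfinish J = pathstart J \<and> path_image J = CC"
proof -
  have c: "arc (chn h n (n-2)) \<and> pathstart (chn h n (n-2)) = p (v 2) \<and>
     pathfinish (chn h n (n-2)) = p (v 1) \<and>
     path_image (chn h n (n-2)) = (\<Union>k\<in>{2..n}. path_image (\<gamma> (ce k)))"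
    using chn_props[of "n-2"] n3 by (simp add: numeral_2_eq_2 Suc_diff_Suc)
  have one: "1 \<in> {1..n}" "nx 1 = 2" using n3 by (auto simp: nx_def)
  have h1: "arc (h 1) \<and> pathstart (h 1) = p (v 1) \<and> pathfinish (h 1) = p (v 2) \<and>
         path_image (h 1) = path_image (\<gamma> (ce 1))" using h_props[OF one(1)] one(2) by simp
  have inter: "path_image (h 1) \<inter> path_image (chn h n (n-2)) \<subseteq> {pathstart (h 1), pathstart (chn h n (n-2))}"
  proof -
    have that_k: "path_image (\<gamma> (ce 1)) \<inter> path_image (\<gamma> (ce k)) \<subseteq> {p (v 1), p (v 2)}"
      if k: "k \<in> {2..n}" for k
    proof -
      have k1: "k \<in> {1..n}" using k by auto
      have "ce 1 \<noteq> ce k" using ce_inj[OF one(1) k1] k by auto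
      hence "path_image (\<gamma> (ce 1)) \<inter> path_image (\<gamma> (ce k)) \<subseteq> p ` (ce 1 \<inter> ce k)"
        using disjE' ce_E one k1 by blast
      also have "\<dots> \<subseteq> p ` ce 1" by blast
      finally show ?thesis using one by (simp add: ce_def)
    qed
    show ?thesis
    proof
      fix x assume "x \<in> path_image (h 1) \<inter> path_image (chn h n (n-2))"
      then obtain k where kk: "k\<in>{2..n}" "x \<in> path_image (\<gamma> (ce 1))" "x \<in> path_image (\<gamma> (ce k))"
        using c h1 by auto
      have "x \<in> {p (v 1), p (v 2)}" using that_k[OF kk(1)] kk(2,3) by blast
      thus "x \<in> {pathstart (h 1), pathstart (chn h n (n-2))}" using c h1 by simp
    qed
  qed
  have "simple_path J" unfolding J_def
    by (rule simple_path_join_loop[OF _ _ _ _ inter]) (use c h1 in simp_all)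
  moreover have "pathfinish J = pathstart J" unfolding J_def using c h1 by simp
  moreover have "path_image J = CC"
  proof -
    have "path_image J = path_image (\<gamma> (ce 1)) \<union> (\<Union>k\<in>{2..n}. path_image (\<gamma> (ce k)))"
      unfolding J_def using c h1 by (simp add: path_image_join)
    also have "\<dots> = (\<Union>k\<in>{1..n}. path_image (\<gamma> (ce k)))"
    proof -
      have "{1..n} = insert 1 {2..n}" using n3 by auto
      thus ?thesis by simp
    qed
    also have "\<dots> = CC" unfolding CC_def cyc_ce by simp
    finally show ?thesis .
  qed
  ultimately show ?thesis by blast
qed


lemma ce_vmem: "k \<in> {1..n} \<Longrightarrow> m \<in> {1..n} \<Longrightarrow> v m \<in> ce k \<Longrightarrow> (k < n \<and> (m = k \<or> m = Suc k)) \<or> (k = n \<and> (m = n \<or> m = 1))"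
  using ce_mem[of k m] by (auto simp: nx_def split: if_splits)

lemma vimg_ce: "k \<in> {1..n} \<Longrightarrow> p (v k) \<in> path_image (\<gamma> (ce k))"
  using vert_in_img ce_E by (simp add: ce_def)

lemma cpt: "k \<in> {1..n} \<Longrightarrow> compact (path_image (\<gamma> (ce k)))"
  using ce_E arcE arc_imp_path compact_path_image by blast

lemma noncyc:
  assumes "1 \<le> i" "i < r" "r < j" "j \<le> n" "1 \<le> s" "s \<le> n" "s < i \<or> j < s"
  shows "{v i, v j} \<notin> cycle_edges v n" "{v r, v s} \<notin> cycle_edges v n"
proof -
  show "{v i, v j} \<notin> cycle_edges v n"
  proof
    assume "{v i, v j} \<in> cycle_edges v n"
    then obtain k where k: "k \<in> {1..n}" "{v i, v j} = ce k" using cyc_ce by blast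
    have "v i \<in> ce k" "v j \<in> ce k" using k by auto
    hence "(k < n \<and> (i = k \<or> i = Suc k)) \<or> (k = n \<and> (i = n \<or> i = 1))"
          "(k < n \<and> (j = k \<or> j = Suc k)) \<or> (k = n \<and> (j = n \<or> j = 1))"
      using ce_vmem[OF k(1), of i] ce_vmem[OF k(1), of j] assms by auto
    thus False using assms by auto
  qed
  show "{v r, v s} \<notin> cycle_edges v n"
  proof
    assume "{v r, v s} \<in> cycle_edges v n"
    then obtain k where k: "k \<in> {1..n}" "{v r, v s} = ce k" using cyc_ce by blast
    have "v r \<in> ce k" "v s \<in> ce k" using k by auto
    hence "(k < n \<and> (r = k \<or> r = Suc k)) \<or> (k = n \<and> (r = n \<or> r = 1))"
          "(k < n \<and> (s = k \<or> s = Suc k)) \<or> (k = n \<and> (s = n \<or> s = 1))"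
      using ce_vmem[OF k(1), of r] ce_vmem[OF k(1), of s] assms by auto
    thus False using assms by auto
  qed
qed

lemma cross_idx:
  assumes ij: "1 \<le> i" "i < r" "r < j" "j \<le> n" "1 \<le> s" "s \<le> n" "s < i \<or> j < s"
    and E: "{v i, v j} \<in> E" "{v r, v s} \<in> E"
    and UW: "(U = inside CC \<and> W = outside CC) \<or> (U = outside CC \<and> W = inside CC)"
    and c1U: "path_image (\<gamma> {v i, v j}) - p ` {v i, v j} \<subseteq> U"
    and c2U: "path_image (\<gamma> {v r, v s}) - p ` {v r, v s} \<subseteq> U"
  shows False
proof -
  have JP: "simple_path J" "pathfinish J = pathstart J" "path_image J = CC" using J_props by auto
  define A where "A = (\<Union>k\<in>{i..<j}. path_image (\<gamma> (ce k)))"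
  define B where "B = (\<Union>k\<in>{1..n} - {i..<j}. path_image (\<gamma> (ce k)))"
  have ran: "i \<in> {1..n}" "j \<in> {1..n}" "r \<in> {1..n}" "s \<in> {1..n}" using ij by auto
  have cA: "compact A" unfolding A_def
    using cpt ij by (intro compact_UN) auto
  have cB: "compact B" unfolding B_def
    using cpt by (intro compact_UN) auto
  have AB: "A \<union> B = path_image J"
  proof -
    have "{i..<j} \<union> ({1..n} - {i..<j}) = {1..n}" using ij by auto
    hence "A \<union> B = (\<Union>k\<in>{1..n}. path_image (\<gamma> (ce k)))" unfolding A_def B_def
      by (metis UN_Un)
    also have "\<dots> = CC" unfolding CC_def cyc_ce by simp
    finally show ?thesis using JP by simp
  qed
  have AiB: "A \<inter> B \<subseteq> {p (v i), p (v j)}"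
  proof
    fix z assume "z \<in> A \<inter> B"
    then obtain k l where kl: "k \<in> {i..<j}" "l \<in> {1..n} - {i..<j}"
      "z \<in> path_image (\<gamma> (ce k))" "z \<in> path_image (\<gamma> (ce l))"
      unfolding A_def B_def by blast
    have k1: "k \<in> {1..n}" "l \<in> {1..n}" using kl ij by auto
    have "ce k \<noteq> ce l" using ce_inj[OF k1] kl by auto
    hence "z \<in> p ` (ce k \<inter> ce l)" using disjE' ce_E k1 kl by blast
    then obtain u where u: "u \<in> ce k" "u \<in> ce l" "z = p u" by blast
    obtain m where m: "m \<in> {1..n}" "u = v m" using u(1) k1 nx_range unfolding ce_def by blast
    have "(k < n \<and> (m = k \<or> m = Suc k)) \<or> (k = n \<and> (m = n \<or> m = 1))"
         "(l < n \<and> (m = l \<or> m = Suc l)) \<or> (l = n \<and> (m = n \<or> m = 1))"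
      using ce_vmem k1 m u by auto
    hence "m = i \<or> m = j" using kl ij by auto
    thus "z \<in> {p (v i), p (v j)}" using u m by auto
  qed
  have RA: "p (v r) \<in> A" unfolding A_def using vimg_ce[OF ran(3)] ij by (intro UN_I[of r]) auto
  have SB: "p (v s) \<in> B" unfolding B_def using vimg_ce[OF ran(4)] ij by (intro UN_I[of s]) auto
  have RB: "p (v r) \<notin> B"
  proof
    assume "p (v r) \<in> B"
    then obtain l where l: "l \<in> {1..n} - {i..<j}" "p (v r) \<in> path_image (\<gamma> (ce l))"
      unfolding B_def by blast
    hence "v r \<in> ce l" using vertE ce_E vV ran by blast
    hence "(l < n \<and> (r = l \<or> r = Suc l)) \<or> (l = n \<and> (r = n \<or> r = 1))"
      using ce_vmem l ran by auto
    thus False using l ij by auto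
  qed
  have SA: "p (v s) \<notin> A"
  proof
    assume "p (v s) \<in> A"
    then obtain l where l: "l \<in> {i..<j}" "p (v s) \<in> path_image (\<gamma> (ce l))"
      unfolding A_def by blast
    have l1: "l \<in> {1..n}" using l ij by auto
    hence "v s \<in> ce l" using vertE ce_E vV ran l by blast
    hence "(l < n \<and> (s = l \<or> s = Suc l)) \<or> (l = n \<and> (s = n \<or> s = 1))"
      using ce_vmem l1 ran by auto
    thus False using l ij by auto
  qed
  have c1: "path (\<gamma> {v i, v j})" "p (v i) \<in> path_image (\<gamma> {v i, v j})" "p (v j) \<in> path_image (\<gamma> {v i, v j})"
    using arcE[OF E(1)] arc_imp_path vert_in_img[OF E(1)] by auto
  have PQ: "p (v i) \<in> path_image J" "p (v j) \<in> path_image J"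
    using vimg_ce ran AB unfolding A_def B_def by blast+
  have vrs: "v r \<noteq> v s" using vneq ran ij by auto
  have prs: "p (v r) \<noteq> p (v s)" using injp vV ran vrs inj_on_eq_iff by metis
  define c2 where "c2 = (if pathstart (\<gamma> {v r, v s}) = p (v r) then \<gamma> {v r, v s} else reversepath (\<gamma> {v r, v s}))"
  have c2: "arc c2 \<and> pathstart c2 = p (v r) \<and> pathfinish c2 = p (v s) \<and> path_image c2 = path_image (\<gamma> {v r, v s})"
    unfolding c2_def using orient_arc[OF arcE[OF E(2)] _ prs] endsE[OF E(2)] by simp
  have dis: "path_image (\<gamma> {v i, v j}) \<inter> path_image c2 = {}"
  proof -
    have "v i \<noteq> v r" "v i \<noteq> v s" "v j \<noteq> v r" "v j \<noteq> v s"
      using vneq ran ij by auto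
    hence ne: "{v i, v j} \<inter> {v r, v s} = {}" by auto
    hence "{v i, v j} \<noteq> {v r, v s}" by auto
    hence "path_image (\<gamma> {v i, v j}) \<inter> path_image (\<gamma> {v r, v s}) \<subseteq> p ` ({v i, v j} \<inter> {v r, v s})"
      using disjE' E by blast
    thus ?thesis using ne c2 by simp
  qed
  have c2J: "path_image c2 \<inter> path_image J \<subseteq> {p (v r), p (v s)}"
  proof
    fix z assume z: "z \<in> path_image c2 \<inter> path_image J"
    then obtain k where k: "k \<in> {1..n}" "z \<in> path_image (\<gamma> (ce k))"
      using JP unfolding CC_def cyc_ce by auto
    have "{v r, v s} \<noteq> ce k" using noncyc(2)[OF ij] cyc_ce k by auto
    hence "z \<in> p ` ({v r, v s} \<inter> ce k)" using disjE' E ce_E k z c2 by blast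
    thus "z \<in> {p (v r), p (v s)}" by blast
  qed
  show False
  proof (rule chord_cross[OF JP(1,2) cA cB AB, of "p (v i)" "p (v j)" "p (v r)" "p (v s)"
        "\<gamma> {v i, v j}" c2 U W])
    show "A \<inter> B \<subseteq> {p (v i), p (v j)}" by (fact AiB)
    show "(U = inside (path_image J) \<and> W = outside (path_image J)) \<or>
        (U = outside (path_image J) \<and> W = inside (path_image J))" using UW JP by simp
    show "path_image (\<gamma> {v i, v j}) - {p (v i), p (v j)} \<subseteq> U" using c1U by simp
    show "path_image c2 - {p (v r), p (v s)} \<subseteq> U" using c2U c2 by simp
  qed (use RA RB SA SB c1 PQ c2 dis c2J in auto)
qed


abbreviation ix where "ix u \<equiv> vidx v n u"

lemma ixV: "u \<in> V \<Longrightarrow> ix u \<in> {1..n} \<and> v (ix u) = u"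
  unfolding vidx_def using bij bij_betw_inv_into_right[OF bij] inv_into_into[of u v "{1..n}"]
  by (simp add: bij_betw_def)

lemma ix_inj: "u \<in> V \<Longrightarrow> w \<in> V \<Longrightarrow> u \<noteq> w \<Longrightarrow> ix u \<noteq> ix w"
  using ixV by metis

lemma cross_v:
  assumes V: "u \<in> V" "w \<in> V" "r \<in> V" "s \<in> V"
    and o: "ix u < ix r" "ix r < ix w" "ix s < ix u \<or> ix w < ix s"
    and E: "{u, w} \<in> E" "{r, s} \<in> E"
  shows "\<not> (ins {u, w} \<and> ins {r, s}) \<and> \<not> (outs {u, w} \<and> outs {r, s}) \<and>
         {u, w} \<notin> cycle_edges v n \<and> {r, s} \<notin> cycle_edges v n"
proof -
  have X: "ix u \<in> {1..n} \<and> v (ix u) = u" "ix w \<in> {1..n} \<and> v (ix w) = w"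
     "ix r \<in> {1..n} \<and> v (ix r) = r" "ix s \<in> {1..n} \<and> v (ix s) = s" using ixV V by auto
  have ij: "1 \<le> ix u" "ix u < ix r" "ix r < ix w" "ix w \<le> n" "1 \<le> ix s" "ix s \<le> n"
    "ix s < ix u \<or> ix w < ix s" using X o by auto
  have E': "{v (ix u), v (ix w)} \<in> E" "{v (ix r), v (ix s)} \<in> E" using E X by auto
  have "\<not> (ins {v (ix u), v (ix w)} \<and> ins {v (ix r), v (ix s)})"
    unfolding ins_def using cross_idx[OF ij E', of "inside CC" "outside CC"] by blast
  moreover have "\<not> (outs {v (ix u), v (ix w)} \<and> outs {v (ix r), v (ix s)})"
    unfolding outs_def using cross_idx[OF ij E', of "outside CC" "inside CC"] by blast
  moreover have "{v (ix u), v (ix w)} \<notin> cycle_edges v n" "{v (ix r), v (ix s)} \<notin> cycle_edges v n"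
    using noncyc[OF ij] by auto
  ultimately show ?thesis using X by simp
qed

lemma not_both: assumes "e \<in> E" shows "\<not> (ins e \<and> outs e)"
proof
  assume h: "ins e \<and> outs e"
  have a: "arc (\<gamma> e)" using arcE assms by blast
  define z where "z = \<gamma> e (1/2)"
  have "z \<in> path_image (\<gamma> e)" unfolding z_def path_image_def by auto
  moreover have "z \<noteq> pathstart (\<gamma> e)"
  proof
    assume "z = pathstart (\<gamma> e)"
    hence "\<gamma> e (1/2) = \<gamma> e 0" unfolding z_def pathstart_def .
    hence "(1/2::real) = 0" by (rule inj_onD[OF arc_imp_inj_on[OF a]]) auto
    thus False by simp
  qed
  moreover have "z \<noteq> pathfinish (\<gamma> e)"
  proof
    assume "z = pathfinish (\<gamma> e)"
    hence "\<gamma> e (1/2) = \<gamma> e 1" unfolding z_def pathfinish_def .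
    hence "(1/2::real) = 1" by (rule inj_onD[OF arc_imp_inj_on[OF a]]) auto
    thus False by simp
  qed
  ultimately have "z \<in> path_image (\<gamma> e) - p ` e" using endsE[OF assms] by auto
  thus False using h inside_Int_outside[of CC] unfolding ins_def outs_def by blast
qed

lemma same_v:
  assumes V: "u \<in> V" "u' \<in> V" "w \<in> V" and o: "ix u < ix w" "ix u' < ix w"
    and E: "{u, w} \<in> E" "{u', w} \<in> E" "{u, w} \<notin> cycle_edges v n" "{u', w} \<notin> cycle_edges v n"
  shows "(ins {u, w} \<and> ins {u', w}) \<or> (outs {u, w} \<and> outs {u', w})"
proof -
  have X: "ix u \<in> {1..n} \<and> v (ix u) = u" "ix w \<in> {1..n} \<and> v (ix w) = w"
     "ix u' \<in> {1..n} \<and> v (ix u') = u'" using ixV V by auto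
  have j: "ix w \<in> {2..n}" using X o by auto
  have "{u, w} \<in> {e \<in> E - cycle_edges v n. \<exists>i. 1 \<le> i \<and> i < ix w \<and> e = {v i, v (ix w)}}"
    using E X o by auto
  moreover have "{u', w} \<in> {e \<in> E - cycle_edges v n. \<exists>i. 1 \<le> i \<and> i < ix w \<and> e = {v i, v (ix w)}}"
    using E X o by auto
  ultimately show ?thesis using onesided[OF j] by blast
qed

lemma side_v:
  assumes "u \<in> V" "w \<in> V" "ix u < ix w" "{u, w} \<in> E" "{u, w} \<notin> cycle_edges v n"
  shows "(ins {u, w} \<or> outs {u, w}) \<and> \<not> (ins {u, w} \<and> outs {u, w})"
  using same_v[OF assms(1,1,2,3,3,4,4,5,5)] not_both[OF assms(4)] by blast

end


context osh begin

lemma part1_core: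
  assumes V: "a \<in> V" "b \<in> V" "x \<in> V" "y \<in> V" "z \<in> V"
    and o: "ix y < ix x" "ix x < ix a" "ix x < ix b" "a \<noteq> b" "z \<noteq> b" "ix x < ix z" "ix a < ix z"
    and E: "{y,a} \<in> E" "{y,b} \<in> E" "{x,a} \<in> E" "{x,b} \<in> E" "{a,b} \<in> E" "{x,z} \<in> E" "{a,z} \<in> E"
  shows False
proof -
  have ab: "ix a \<noteq> ix b" "ix z \<noteq> ix b" using ix_inj V o by auto
  show False
  proof (cases "ix a < ix b")
    case True
    note C1 = cross_v[OF V(4,1,3,2) o(1,2) _ E(1,4)]
    note C2 = cross_v[OF V(4,1,3,5) o(1,2) _ E(1,6)]
    have C1': "\<not> (ins {y, a} \<and> ins {x, b}) \<and> \<not> (outs {y, a} \<and> outs {x, b}) \<and>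
         {y, a} \<notin> cycle_edges v n \<and> {x, b} \<notin> cycle_edges v n" using C1 True by blast
    have C2': "\<not> (ins {y, a} \<and> ins {x, z}) \<and> \<not> (outs {y, a} \<and> outs {x, z}) \<and>
         {y, a} \<notin> cycle_edges v n \<and> {x, z} \<notin> cycle_edges v n" using C2 o by blast
    have S1: "ins {y,a} \<or> outs {y,a}" "ins {x,z} \<or> outs {x,z}" "ins {x,b} \<or> outs {x,b}"
      using side_v[OF V(4,1) _ E(1)] side_v[OF V(3,5) o(6) E(6)] side_v[OF V(3,2) o(3) E(4)] o C1' C2'
      by auto
    show False
    proof (cases "ix z < ix b")
      case True
      have C3: "\<not> (ins {x, z} \<and> ins {a, b}) \<and> \<not> (outs {x, z} \<and> outs {a, b}) \<and>
         {x, z} \<notin> cycle_edges v n \<and> {a, b} \<notin> cycle_edges v n"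
        using cross_v[OF V(3,5,1,2) o(2,7) _ E(6,5)] True by blast
      have S: "(ins {a, b} \<and> ins {x, b}) \<or> (outs {a, b} \<and> outs {x, b})"
        using same_v[OF V(1,3,2) \<open>ix a < ix b\<close> o(3) E(5,4)] C1' C3 by blast
      show False using C1' C2' C3 S S1 by blast
    next
      case False
      hence bz: "ix b < ix z" using ab by auto
      have C3: "\<not> (ins {x, b} \<and> ins {a, z}) \<and> \<not> (outs {x, b} \<and> outs {a, z}) \<and>
         {x, b} \<notin> cycle_edges v n \<and> {a, z} \<notin> cycle_edges v n"
        using cross_v[OF V(3,2,1,5) o(2) \<open>ix a < ix b\<close> _ E(4,7)] bz by blast
      have S: "(ins {a, z} \<and> ins {x, z}) \<or> (outs {a, z} \<and> outs {x, z})"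
        using same_v[OF V(1,3,5) o(7) o(6) E(7,6)] C2' C3 by blast
      show False using C1' C2' C3 S S1 by blast
    qed
  next
    case False
    hence ba: "ix b < ix a" using ab by auto
    have D1: "\<not> (ins {y, b} \<and> ins {x, a}) \<and> \<not> (outs {y, b} \<and> outs {x, a}) \<and>
         {y, b} \<notin> cycle_edges v n \<and> {x, a} \<notin> cycle_edges v n"
      using cross_v[OF V(4,2,3,1) o(1,3) _ E(2,3)] ba by blast
    have D2: "\<not> (ins {y, b} \<and> ins {x, z}) \<and> \<not> (outs {y, b} \<and> outs {x, z}) \<and>
         {y, b} \<notin> cycle_edges v n \<and> {x, z} \<notin> cycle_edges v n"
      using cross_v[OF V(4,2,3,5) o(1,3) _ E(2,6)] ba o by auto
    have D3: "\<not> (ins {y, a} \<and> ins {x, z}) \<and> \<not> (outs {y, a} \<and> outs {x, z}) \<and>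
         {y, a} \<notin> cycle_edges v n \<and> {x, z} \<notin> cycle_edges v n"
      using cross_v[OF V(4,1,3,5) o(1,2) _ E(1,6)] o by blast
    have S: "(ins {y, a} \<and> ins {x, a}) \<or> (outs {y, a} \<and> outs {x, a})"
      using same_v[OF V(4,3,1) _ o(2) E(1,3)] o D1 D3 by auto
    have "ins {x, z} \<or> outs {x, z}" using side_v[OF V(3,5) o(6) E(6)] D2 by blast
    moreover have "ins {y, b} \<or> outs {y, b}" using side_v[OF V(4,2) _ E(2)] D2 o ba by auto
    ultimately show False using D1 D2 D3 S by blast
  qed
qed

lemma part2_core:
  assumes V: "a \<in> V" "b \<in> V" "x \<in> V" "y \<in> V" "z1 \<in> V" "z2 \<in> V" "w1 \<in> V" "w2 \<in> V"
    and o: "ix y < ix x" "ix x < ix a" "ix x < ix b" "a \<noteq> b"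
       "ix z1 < ix z2" "ix z2 < ix x" "ix w1 < ix w2" "ix w2 < ix x"
    and E: "{y,a} \<in> E" "{y,b} \<in> E" "{x,a} \<in> E" "{x,b} \<in> E"
       "{z1,x} \<in> E" "{z2,a} \<in> E" "{w1,x} \<in> E" "{w2,b} \<in> E"
  shows False
proof -
  have ab: "ix a \<noteq> ix b" using ix_inj V o by auto
  have X1: "\<not> (ins {z1, x} \<and> ins {z2, a}) \<and> \<not> (outs {z1, x} \<and> outs {z2, a}) \<and>
         {z1, x} \<notin> cycle_edges v n \<and> {z2, a} \<notin> cycle_edges v n"
    using cross_v[OF V(5,3,6,1) o(5,6) _ E(5,6)] o by blast
  have X2: "\<not> (ins {w1, x} \<and> ins {w2, b}) \<and> \<not> (outs {w1, x} \<and> outs {w2, b}) \<and>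
         {w1, x} \<notin> cycle_edges v n \<and> {w2, b} \<notin> cycle_edges v n"
    using cross_v[OF V(7,3,8,2) o(7,8) _ E(7,8)] o by blast
  have S0: "(ins {z1, x} \<and> ins {w1, x}) \<or> (outs {z1, x} \<and> outs {w1, x})"
    using same_v[OF V(5,7,3) _ _ E(5,7)] o X1 X2 by auto
  have s1: "ins {z2, a} \<or> outs {z2, a}" using side_v[OF V(6,1) _ E(6)] X1 o by auto
  have s2: "ins {w2, b} \<or> outs {w2, b}" using side_v[OF V(8,2) _ E(8)] X2 o by auto
  show False
  proof (cases "ix a < ix b")
    case True
    have Y: "\<not> (ins {y, a} \<and> ins {x, b}) \<and> \<not> (outs {y, a} \<and> outs {x, b}) \<and>
         {y, a} \<notin> cycle_edges v n \<and> {x, b} \<notin> cycle_edges v n"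
      using cross_v[OF V(4,1,3,2) o(1,2) _ E(1,4)] True by blast
    have S1: "(ins {z2, a} \<and> ins {y, a}) \<or> (outs {z2, a} \<and> outs {y, a})"
      using same_v[OF V(6,4,1) _ _ E(6,1)] o X1 Y by auto
    have S2: "(ins {w2, b} \<and> ins {x, b}) \<or> (outs {w2, b} \<and> outs {x, b})"
      using same_v[OF V(8,3,2) _ _ E(8,4)] o X2 Y by auto
    show False using X1 X2 S0 S1 S2 Y by blast
  next
    case False
    hence ba: "ix b < ix a" using ab by auto
    have Y: "\<not> (ins {y, b} \<and> ins {x, a}) \<and> \<not> (outs {y, b} \<and> outs {x, a}) \<and>
         {y, b} \<notin> cycle_edges v n \<and> {x, a} \<notin> cycle_edges v n"
      using cross_v[OF V(4,2,3,1) o(1,3) _ E(2,3)] ba by blast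
    have S1: "(ins {z2, a} \<and> ins {x, a}) \<or> (outs {z2, a} \<and> outs {x, a})"
      using same_v[OF V(6,3,1) _ _ E(6,3)] o X1 Y by auto
    have S2: "(ins {w2, b} \<and> ins {y, b}) \<or> (outs {w2, b} \<and> outs {y, b})"
      using same_v[OF V(8,4,2) _ _ E(8,2)] o X2 Y by auto
    show False using X1 X2 S0 S1 S2 Y by blast
  qed
qed

end


lemma setc: "{f i | i. i < (k::nat)} = f ` {..<k}" by blast

lemma cs_verts_Suc: "cs_verts T st (Suc k) = insert (fst (st!k)) (cs_verts T st k)"
  by (cases T) (simp add: cs_verts_def setc[of "\<lambda>i. fst (st!i)"] lessThan_Suc insert_commute)

lemma cs_edges_Suc: "cs_edges T st (Suc k) = cs_edges T st k \<union>
   {{fst (st!k), fst (snd (st!k))}, {fst (st!k), snd (snd (st!k))}}"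
  by (cases T) (simp add: cs_edges_def setc[of "\<lambda>i. {fst (st!i), fst (snd (st!i))}"]
      setc[of "\<lambda>i. {fst (st!i), snd (snd (st!i))}"] lessThan_Suc Un_ac insert_commute)

lemma verts_mono: "k \<le> k' \<Longrightarrow> cs_verts T st k \<subseteq> cs_verts T st k'"
  by (cases T) (auto simp: cs_verts_def setc[of "\<lambda>i. fst (st!i)"])

lemma edges_2set:
  assumes "valid_cs T st"
  shows "k \<le> length st \<Longrightarrow> e \<in> cs_edges T st k \<Longrightarrow>
    \<exists>a b. a \<noteq> b \<and> e = {a, b} \<and> a \<in> cs_verts T st k \<and> b \<in> cs_verts T st k"
proof (induction k arbitrary: e)
  case 0
  obtain t1 t2 t3 where T: "T = (t1, t2, t3)" by (cases T)
  have "t1 \<noteq> t2" "t2 \<noteq> t3" "t1 \<noteq> t3" using assms T by (auto simp: valid_cs_def)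
  thus ?case using 0 T by (auto simp: cs_edges_def cs_verts_def)
next
  case (Suc k)
  have k: "k < length st" using Suc.prems by auto
  have v: "fst (st!k) \<notin> cs_verts T st k"
    and ed: "{fst (snd (st!k)), snd (snd (st!k))} \<in> cs_edges T st k"
    using assms k by (auto simp: valid_cs_def)
  obtain a b where ab: "a \<noteq> b" "{fst (snd (st!k)), snd (snd (st!k))} = {a, b}"
    "a \<in> cs_verts T st k" "b \<in> cs_verts T st k" using Suc.IH[OF _ ed] k by auto
  have xy: "fst (snd (st!k)) \<in> cs_verts T st k" "snd (snd (st!k)) \<in> cs_verts T st k"
    using ab(2,3,4) by (metis doubleton_eq_iff)+
  show ?case
  proof (cases "e \<in> cs_edges T st k")
    case True
    then obtain a b where "a \<noteq> b \<and> e = {a, b} \<and> a \<in> cs_verts T st k \<and> b \<in> cs_verts T st k"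
      using Suc.IH k by fastforce
    thus ?thesis by (auto simp: cs_verts_Suc)
  next
    case False
    hence "e = {fst (st!k), fst (snd (st!k))} \<or> e = {fst (st!k), snd (snd (st!k))}"
      using Suc.prems(2) by (auto simp: cs_edges_Suc)
    thus ?thesis
    proof
      assume "e = {fst (st!k), fst (snd (st!k))}"
      thus ?thesis using xy v
        by (intro exI[of _ "fst (st!k)"] exI[of _ "fst (snd (st!k))"]) (auto simp: cs_verts_Suc)
    next
      assume "e = {fst (st!k), snd (snd (st!k))}"
      thus ?thesis using xy v
        by (intro exI[of _ "fst (st!k)"] exI[of _ "snd (snd (st!k))"]) (auto simp: cs_verts_Suc)
    qed
  qed
qed

lemma stacked_info:
  assumes "valid_cs T st" "w \<in> stackedX st e"
  obtains i where "i < length st" "w = fst (st!i)" "e \<in> cs_edges T st i" "w \<notin> cs_verts T st i"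
    "w \<in> tree_verts T st" "\<And>u. u \<in> e \<Longrightarrow> {w, u} \<in> tree_edges T st"
proof -
  obtain i where i: "i < length st" "w = fst (st!i)" "{fst (snd (st!i)), snd (snd (st!i))} = e"
    using assms(2) unfolding stackedX_def by blast
  have "e \<in> cs_edges T st i" "w \<notin> cs_verts T st i" using assms(1) i by (auto simp: valid_cs_def)
  moreover have "w \<in> tree_verts T st" using i by (cases T) (auto simp: cs_verts_def)
  moreover have "{w, u} \<in> tree_edges T st" if "u \<in> e" for u
    using i that by (cases T) (auto simp: cs_edges_def)
  ultimately show ?thesis using that i by blast
qed



lemma two_elems: assumes "2 \<le> card S" obtains p q where "p \<in> S" "q \<in> S" "p \<noteq> q"
proof -
  have "\<exists>p q. p \<in> S \<and> q \<in> S \<and> p \<noteq> q"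
  proof (rule ccontr)
    assume h: "\<not> ?thesis"
    have fin: "finite S" using assms card.infinite by fastforce
    show False
    proof (cases "S = {}")
      case True thus False using assms by simp
    next
      case False
      then obtain p where "p \<in> S" by blast
      hence "S \<subseteq> {p}" using h by blast
      hence "card S \<le> 1" using card_mono[of "{p}" S] by simp
      thus False using assms by simp
    qed
  qed
  thus ?thesis using that by blast
qed

theorem claim3:
  fixes T :: "'v \<times> 'v \<times> 'v" and st :: "('v \<times> 'v \<times> 'v) list"
    and v :: "nat \<Rightarrow> 'v" and n :: nat
    and p :: "'v \<Rightarrow> complex" and \<gamma> :: "'v set \<Rightarrow> real \<Rightarrow> complex"
    and a b x :: 'v
  assumes cs: "valid_cs T st"
    and n: "n = card (tree_verts T st)"
    and ord: "bij_betw v {1..n} (tree_verts T st)"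
    and emb: "plane_embedding (tree_verts T st) (tree_edges T st \<union> cycle_edges v n) p \<gamma>"
    and ham: "one_sided_ham (tree_verts T st) (tree_edges T st \<union> cycle_edges v n) p \<gamma> v n"
    and e: "{a, b} \<in> tree_edges T st"
    and XL2: "card (XL st v n {a, b}) \<ge> 2"
    and x: "x \<in> XL st v n {a, b}"
    and xmax: "\<forall>w \<in> XL st v n {a, b}. vidx v n w \<le> vidx v n x"
  shows "XR st v n {x, a} = {} \<and> XR st v n {x, b} = {} \<and>
         (card (XL st v n {x, a}) \<le> 1 \<or> card (XL st v n {x, b}) \<le> 1)"
proof -
  let ?V = "tree_verts T st" and ?E = "tree_edges T st \<union> cycle_edges v n"
  interpret O: osh ?V ?E p \<gamma> v n using emb ham by unfold_locales
  obtain a0 b0 where "a0 \<noteq> b0" "{a, b} = {a0, b0}" "a0 \<in> ?V" "b0 \<in> ?V"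
    using edges_2set[OF cs le_refl e] by blast
  hence ab: "a \<noteq> b" "a \<in> ?V" "b \<in> ?V" by (metis doubleton_eq_iff)+
  have xX: "x \<in> stackedX st {a,b}" "vidx v n x < vidx v n a" "vidx v n x < vidx v n b"
    using x unfolding XL_def by auto
  obtain i where i: "i < length st" "x = fst (st!i)" "{a,b} \<in> cs_edges T st i"
      "x \<notin> cs_verts T st i" "x \<in> ?V" "\<And>u. u \<in> {a,b} \<Longrightarrow> {x, u} \<in> tree_edges T st"
    by (rule stacked_info[OF cs xX(1)]) blast
  have abi: "a \<in> cs_verts T st i" "b \<in> cs_verts T st i"
  proof -
    obtain c d where "c \<noteq> d" "{a, b} = {c, d}" "c \<in> cs_verts T st i" "d \<in> cs_verts T st i"
      using edges_2set[OF cs _ i(3)] i(1) by fastforce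
    thus "a \<in> cs_verts T st i" "b \<in> cs_verts T st i" by (metis doubleton_eq_iff)+
  qed
  obtain y0 y1 where y01: "y0 \<in> XL st v n {a, b}" "y1 \<in> XL st v n {a, b}" "y0 \<noteq> y1"
    using two_elems[OF XL2] by blast
  obtain y where y: "y \<in> XL st v n {a, b}" "y \<noteq> x" using y01 by metis
  have yX: "y \<in> stackedX st {a,b}" using y unfolding XL_def by auto
  obtain iy where iy: "y \<in> ?V" "\<And>u. u \<in> {a,b} \<Longrightarrow> {y, u} \<in> tree_edges T st"
    by (rule stacked_info[OF cs yX]) blast
  have yx: "vidx v n y < vidx v n x"
    using xmax y O.ix_inj[OF iy(1) i(5) y(2)] by force
  have EE: "{y,a} \<in> ?E" "{y,b} \<in> ?E" "{x,a} \<in> ?E" "{x,b} \<in> ?E" "{a,b} \<in> ?E"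
    using iy(2) i(6) e by auto
  have P1: "XR st v n {x, a'} = {}" if ab': "a' \<in> {a,b}" "b' \<in> {a,b}" "a' \<noteq> b'" for a' b'
  proof (rule ccontr)
    assume "XR st v n {x, a'} \<noteq> {}"
    then obtain z where z: "z \<in> XR st v n {x, a'}" by blast
    have zX: "z \<in> stackedX st {x,a'}" "vidx v n x < vidx v n z" "vidx v n a' < vidx v n z"
      using z unfolding XR_def by auto
    obtain k where k: "k < length st" "z = fst (st!k)" "{x,a'} \<in> cs_edges T st k"
      "z \<notin> cs_verts T st k" "z \<in> ?V" "\<And>u. u \<in> {x,a'} \<Longrightarrow> {z, u} \<in> tree_edges T st"
      by (rule stacked_info[OF cs zX(1)]) blast
    have xk: "x \<in> cs_verts T st k"
    proof -
      obtain c d where "c \<noteq> d" "{x, a'} = {c, d}" "c \<in> cs_verts T st k" "d \<in> cs_verts T st k"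
        using edges_2set[OF cs _ k(3)] k(1) by fastforce
      thus ?thesis by (metis doubleton_eq_iff)
    qed
    have "i < k"
    proof (rule ccontr)
      assume "\<not> i < k"
      hence "k \<le> i" by simp
      hence "cs_verts T st k \<subseteq> cs_verts T st i" by (rule verts_mono)
      thus False using xk i(4) by blast
    qed
    hence "b' \<in> cs_verts T st k" using verts_mono[of i k T st] abi ab' by auto
    hence zb: "z \<noteq> b'" using k(4) by blast
    have V': "a' \<in> ?V" "b' \<in> ?V" using ab' ab by auto
    have o': "vidx v n x < vidx v n a'" "vidx v n x < vidx v n b'" using ab' xX by auto
    have ab'': "{a', b'} = {a, b}" using ab' by auto
    have E': "{y,a'} \<in> ?E" "{y,b'} \<in> ?E" "{x,a'} \<in> ?E" "{x,b'} \<in> ?E" "{a',b'} \<in> ?E"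
      "{x,z} \<in> ?E" "{a',z} \<in> ?E"
      using iy(2) i(6) e ab' ab'' k(6)[of x] k(6)[of a'] by (auto simp: insert_commute)
    show False
      using O.part1_core[OF V' i(5) iy(1) k(5) yx o' ab'(3) zb zX(2,3) E'] .
  qed
  have XRa: "XR st v n {x, a} = {}" using P1[of a b] ab by auto
  have XRb: "XR st v n {x, b} = {}" using P1[of b a] ab by auto
  have P2: "card (XL st v n {x, a}) \<le> 1 \<or> card (XL st v n {x, b}) \<le> 1"
  proof (rule ccontr)
    assume "\<not> ?thesis"
    hence c2: "2 \<le> card (XL st v n {x, a})" "2 \<le> card (XL st v n {x, b})" by auto
    have pick: "\<exists>z1 z2. z1 \<in> ?V \<and> z2 \<in> ?V \<and> vidx v n z1 < vidx v n z2 \<and> vidx v n z2 < vidx v n x \<and>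
                 {z1, x} \<in> ?E \<and> {z2, c} \<in> ?E"
      if c: "c \<in> {a, b}" "2 \<le> card (XL st v n {x, c})" for c
    proof -
      obtain q1 q2 where q: "q1 \<in> XL st v n {x, c}" "q2 \<in> XL st v n {x, c}" "q1 \<noteq> q2"
        using two_elems[OF c(2)] by blast
      have info: "q \<in> ?V \<and> vidx v n q < vidx v n x \<and> {q, x} \<in> ?E \<and> {q, c} \<in> ?E"
        if "q \<in> XL st v n {x, c}" for q
      proof -
        have qX: "q \<in> stackedX st {x,c}" "vidx v n q < vidx v n x" using that unfolding XL_def by auto
        obtain kq where "q \<in> ?V" "\<And>u. u \<in> {x,c} \<Longrightarrow> {q, u} \<in> tree_edges T st"
          by (rule stacked_info[OF cs qX(1)]) blast
        thus ?thesis using qX by auto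
      qed
      have "vidx v n q1 \<noteq> vidx v n q2" using O.ix_inj info q by blast
      hence "vidx v n q1 < vidx v n q2 \<or> vidx v n q2 < vidx v n q1" by auto
      thus ?thesis using info q by blast
    qed
    obtain z1 z2 where z: "z1 \<in> ?V" "z2 \<in> ?V" "vidx v n z1 < vidx v n z2" "vidx v n z2 < vidx v n x"
      "{z1, x} \<in> ?E" "{z2, a} \<in> ?E" using pick[of a] c2 by auto
    obtain w1 w2 where w: "w1 \<in> ?V" "w2 \<in> ?V" "vidx v n w1 < vidx v n w2" "vidx v n w2 < vidx v n x"
      "{w1, x} \<in> ?E" "{w2, b} \<in> ?E" using pick[of b] c2 by auto
    show False
      using O.part2_core[OF ab(2,3) i(5) iy(1) z(1,2) w(1,2) yx xX(2,3) ab(1) z(3,4) w(3,4)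
          EE(1-4) z(5,6) w(5,6)] .
  qed
  show ?thesis using XRa XRb P2 by blast
qed


end
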